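(* Let $L$ be a Lie algebra over a field $F$ satisfying an identity \[f(x_0,x_1,\dots,x_{n-1})=[x_0,x_1,\dots,x_{n-1}]+\sum_{1\ne\sigma\in S_{n-1}}\alpha_\sigma[x_0,x_{\sigma(1)},\dots,x_{\sigma(n-1)}]=0,\quad\alpha_\sigma\in F,\] where $n$ is the minimal degree of an identity satisfied by $L$. Let $f_1(x_0,x_2,\dots,x_{n-1})=[x_0,x_2,\dots,x_{n-1}]+\sum_{1\ne\sigma\in S_{n-1},\,\sigma(1)=1}\alpha_\sigma[x_0,x_{\sigma(2)},\dots,x_{\sigma(n-1)}]$. Then for arbitrary elements $a,b_2,\dots,b_{n-1},c\in\tilde L=L\otimes_FE$, \[[f_1(a,b_2,\dots,b_{n-1}),c]\in\sum F[a,b_{i_2},\dots,[b_{i_k},c],\dots,b_{i_{n-1}}],\] where the sum runs over all permutations $i_2,\dots,i_{n-1}$ of $2,\dots,n-1$ and all positions $2\le k\le n-1$.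
   Context: Commutators are left-normed: $[a,b,c,\dots]=[\cdots[[a,b],c],\dots]$. $E$ is the commutative associative $F$-algebra without unit generated by $e_1,e_2,\dots$ with relations $e_i^2=0$, and $\tilde L=L\otimes_FE$ with $[x\otimes\alpha,y\otimes\beta]=[x,y]\otimes\alpha\beta$. *)

theory Defs
  imports Main HOL.Vector_Spaces "HOL-Combinatorics.Permutations" "HOL-Library.Function_Algebras"
begin

locale lie_algebra = vector_space sc
  for sc :: "'f::field \<Rightarrow> 'v::ab_group_add \<Rightarrow> 'v" +
  fixes br :: "'v \<Rightarrow> 'v \<Rightarrow> 'v"
  assumes br_add_left: "br (x + y) z = br x z + br y z"
    and br_add_right: "br x (y + z) = br x y + br x z"
    and br_scale_left: "br (sc c x) y = sc c (br x y)"
    and br_scale_right: "br x (sc c y) = sc c (br x y)"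
    and br_alt: "br x x = 0"
    and jacobi: "br (br x y) z + br (br y z) x + br (br z x) y = 0"

definition lnc :: "('v \<Rightarrow> 'v \<Rightarrow> 'v) \<Rightarrow> 'v \<Rightarrow> 'v list \<Rightarrow> 'v" where
  "lnc br x0 xs = foldl br x0 xs"

definition mlpoly ::
  "('f \<Rightarrow> 'v::comm_monoid_add \<Rightarrow> 'v) \<Rightarrow> ('v \<Rightarrow> 'v \<Rightarrow> 'v) \<Rightarrow> nat \<Rightarrow> ((nat \<Rightarrow> nat) \<Rightarrow> 'f) \<Rightarrow> (nat \<Rightarrow> 'v) \<Rightarrow> 'v"
  where
  "mlpoly sc br m \<beta> x =
     (\<Sum>\<sigma> \<in> {\<sigma>. \<sigma> permutes {1..<m}}. sc (\<beta> \<sigma>) (lnc br (x 0) (map (\<lambda>i. x (\<sigma> i)) [1..<m])))"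

definition satisfies_ml_identity ::
  "('f::zero \<Rightarrow> 'v::comm_monoid_add \<Rightarrow> 'v) \<Rightarrow> ('v \<Rightarrow> 'v \<Rightarrow> 'v) \<Rightarrow> nat \<Rightarrow> ((nat \<Rightarrow> nat) \<Rightarrow> 'f) \<Rightarrow> bool"
  where
  "satisfies_ml_identity sc br m \<beta> \<longleftrightarrow> (\<forall>x. mlpoly sc br m \<beta> x = 0)"

(* The coefficient vector beta is nonzero (as a multilinear Lie polynomial of degree m;
   the left-normed words [x_0, x_sigma(1), ...] form a basis of the multilinear part). *)
definition nonzero_coeffs :: "nat \<Rightarrow> ((nat \<Rightarrow> nat) \<Rightarrow> 'f::zero) \<Rightarrow> bool" where
  "nonzero_coeffs m \<beta> \<longleftrightarrow> (\<exists>\<sigma>. \<sigma> permutes {1..<m} \<and> \<beta> \<sigma> \<noteq> 0)"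

(* E = commutative non-unital algebra generated by e_1,e_2,... with e_i^2 = 0.
   A basis of E is e_S = prod_{i in S} e_i for finite nonempty S \<subseteq> nat, with
   e_S e_T = e_{S \<union> T} if S \<inter> T = {} and 0 otherwise.
   Hence L \<otimes>_F E \<cong> finitely supported functions u : nat set \<Rightarrow> L with
   u S = 0 unless S is finite and nonempty (u = sum_S u(S) \<otimes> e_S). *)
definition ltilde :: "(nat set \<Rightarrow> 'v::zero) set" where
  "ltilde = {u. finite {S. u S \<noteq> 0} \<and> (\<forall>S. u S \<noteq> 0 \<longrightarrow> finite S \<and> S \<noteq> {})}"

definition tsc :: "('f \<Rightarrow> 'v \<Rightarrow> 'v) \<Rightarrow> 'f \<Rightarrow> (nat set \<Rightarrow> 'v) \<Rightarrow> (nat set \<Rightarrow> 'v)" where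
  "tsc sc c u = (\<lambda>S. sc c (u S))"

(* bracket on L~: [x \<otimes> e_T, y \<otimes> e_U] = [x,y] \<otimes> e_T e_U *)
definition tbr :: "('v::comm_monoid_add \<Rightarrow> 'v \<Rightarrow> 'v) \<Rightarrow> (nat set \<Rightarrow> 'v) \<Rightarrow> (nat set \<Rightarrow> 'v) \<Rightarrow> (nat set \<Rightarrow> 'v)"
  where
  "tbr br u v = (\<lambda>S. if finite S then
       (\<Sum>T \<in> {T. T \<subseteq> S \<and> T \<noteq> {} \<and> T \<noteq> S}. br (u T) (v (S - T))) else 0)"

end

theory Submission
  imports Defs "HOL-Library.FuncSet"
begin


locale lie_like = module sc
  for sc :: "'f::field \<Rightarrow> 'v::ab_group_add \<Rightarrow> 'v" +
  fixes br :: "'v \<Rightarrow> 'v \<Rightarrow> 'v"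
  assumes ad_l: "br (x + y) z = br x z + br y z"
    and ad_r: "br x (y + z) = br x y + br x z"
    and sc_l: "br (sc c x) y = sc c (br x y)"
    and sc_r: "br x (sc c y) = sc c (br x y)"
    and anti: "br x y = - br y x"
    and jac: "br (br x y) z + br (br y z) x + br (br z x) y = 0"
begin

lemma br0l[simp]: "br 0 y = 0"
  using ad_l[of 0 0 y] by simp
lemma br0r[simp]: "br x 0 = 0"
  using ad_r[of x 0 0] by simp
lemma brnl: "br (- x) y = - br x y"
  using ad_l[of x "-x" y] by (metis add.commute eq_neg_iff_add_eq_0 add.right_inverse br0l)
lemma brnr: "br x (- y) = - br x y"
  using ad_r[of x y "-y"] by (metis add.commute eq_neg_iff_add_eq_0 add.right_inverse br0r)

lemma brdl: "br (x - y) z = br x z - br y z"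
  by (simp only: diff_conv_add_uminus ad_l brnl)

lemma lnc_Cons: "lnc br u (x # xs) = lnc br (br u x) xs"
  by (simp add: lnc_def)
lemma lnc_Nil: "lnc br u [] = u"
  by (simp add: lnc_def)
lemma lnc_snoc: "lnc br u (xs @ [x]) = br (lnc br u xs) x"
  by (simp add: lnc_def)
lemma lnc_append: "lnc br u (xs @ ys) = lnc br (lnc br u xs) ys"
  by (simp add: lnc_def)

lemma lnc_add: "lnc br (u + v) xs = lnc br u xs + lnc br v xs"
  by (induction xs arbitrary: u v) (simp_all add: lnc_Cons lnc_Nil ad_l)
lemma lnc_sc: "lnc br (sc c u) xs = sc c (lnc br u xs)"
  by (induction xs arbitrary: u) (simp_all add: lnc_Cons lnc_Nil sc_l)
lemma lnc_neg: "lnc br (- u) xs = - lnc br u xs"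
  by (induction xs arbitrary: u) (simp_all add: lnc_Cons lnc_Nil brnl)

lemma span_img:
  assumes add: "\<And>x y. g (x + y) = g x + g y"
    and scl: "\<And>c x. g (sc c x) = sc c (g x)"
    and gen: "\<And>x. x \<in> S \<Longrightarrow> g x \<in> span T"
    and x: "x \<in> span S"
  shows "g x \<in> span T"
  using x
proof (induction rule: span_induct_alt)
  case base
  have "g 0 = g 0 + g 0" using add[of 0 0] by simp
  then have "g 0 = 0" by simp
  then show ?case by (simp add: span_zero)
next
  case (step c x y)
  then show ?case by (simp add: add scl span_add span_scale gen)
qed

lemma jac2: "br v (br w y) = br (br v w) y - br (br v y) w"
proof -
  have "br (br v w) y + br (br w y) v + br (br y v) w = 0" by (rule jac)
  moreover have "br (br w y) v = - br v (br w y)" by (rule anti)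
  moreover have "br (br y v) w = - br (br v y) w" by (simp add: anti[of y v] brnl)
  ultimately show ?thesis by (simp add: algebra_simps eq_neg_iff_add_eq_0)
qed

lemma memI: "x = f y \<Longrightarrow> P y \<Longrightarrow> x \<in> {f y | y. P y}"
  by blast

lemma lemD:
  assumes "distinct (z # xs)"
  shows "br v (lnc br (H z) (map H xs)) \<in>
     span {lnc br v (map H qs) | qs. distinct qs \<and> set qs = set (z # xs)}"
  using assms
proof (induction xs arbitrary: v rule: rev_induct)
  case Nil
  show ?case by (rule span_base, rule memI[of _ _ "[z]"]) (simp_all add: lnc_Cons lnc_Nil)
next
  case (snoc x xs)
  let ?w = "lnc br (H z) (map H xs)"
  have d: "distinct (z # xs)" using snoc.prems by simp
  have eq: "br v (lnc br (H z) (map H (xs @ [x]))) = br (br v ?w) (H x) - br (br v (H x)) ?w"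
    by (simp add: lnc_snoc jac2)
  have 1: "br (br v ?w) (H x) \<in> span {lnc br v (map H qs) | qs. distinct qs \<and> set qs = set (z # xs @ [x])}"
  proof (rule span_img[where g = "\<lambda>t. br t (H x)", OF _ _ _ snoc.IH[OF d]])
    fix t assume "t \<in> {lnc br v (map H qs) | qs. distinct qs \<and> set qs = set (z # xs)}"
    then obtain qs where t: "t = lnc br v (map H qs)" and q: "distinct qs" "set qs = set (z # xs)" by blast
    show "br t (H x) \<in> span {lnc br v (map H qs) | qs. distinct qs \<and> set qs = set (z # xs @ [x])}"
    proof (rule span_base, rule memI[of _ _ "qs @ [x]"])
      show "br t (H x) = lnc br v (map H (qs @ [x]))" by (simp add: t lnc_snoc)
      show "distinct (qs @ [x]) \<and> set (qs @ [x]) = set (z # xs @ [x])"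
        using q snoc.prems by auto
    qed
  qed (simp_all add: ad_l sc_l)
  have 2: "br (br v (H x)) ?w \<in> span {lnc br v (map H qs) | qs. distinct qs \<and> set qs = set (z # xs @ [x])}"
  proof (rule span_mono[THEN subsetD, OF _ snoc.IH[OF d, of "br v (H x)"]])
    show "{lnc br (br v (H x)) (map H qs) | qs. distinct qs \<and> set qs = set (z # xs)}
        \<subseteq> {lnc br v (map H qs) | qs. distinct qs \<and> set qs = set (z # xs @ [x])}"
    proof
      fix t assume "t \<in> {lnc br (br v (H x)) (map H qs) | qs. distinct qs \<and> set qs = set (z # xs)}"
      then obtain qs where t: "t = lnc br (br v (H x)) (map H qs)" and q: "distinct qs" "set qs = set (z # xs)" by blast
      show "t \<in> {lnc br v (map H qs) | qs. distinct qs \<and> set qs = set (z # xs @ [x])}"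
      proof (rule memI[of _ _ "x # qs"])
        show "t = lnc br v (map H (x # qs))" by (simp add: t lnc_Cons)
        show "distinct (x # qs) \<and> set (x # qs) = set (z # xs @ [x])"
          using q snoc.prems by auto
      qed
    qed
  qed
  show ?case unfolding eq by (rule span_diff[OF 1 2])
qed

lemma lemC:
  assumes dk: "distinct ks" and p: "p \<in> set ks" and z: "z \<notin> set ks"
  shows "lnc br u (map G ks) \<in>
    span {lnc br (G p) (map (G(z := u)) qs) | qs. distinct qs \<and> set qs = insert z (set ks - {p})}"
proof -
  obtain xs ys where ks: "ks = xs @ p # ys" using split_list[OF p] by blast
  let ?H = "G(z := u)"
  have mx: "map G xs = map ?H xs" "map G ys = map ?H ys" using z ks by auto
  have e: "lnc br u (map G ks) = lnc br (- br (G p) (lnc br (?H z) (map ?H xs))) (map ?H ys)"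
    by (simp add: ks lnc_append lnc_Cons mx[symmetric] anti[of _ "G p"])
  have dz: "distinct (z # xs)" using dk z ks by auto
  show ?thesis unfolding e
  proof (rule span_img[where g = "\<lambda>t. lnc br (- t) (map ?H ys)", OF _ _ _ lemD[OF dz]])
    fix t assume "t \<in> {lnc br (G p) (map ?H qs) | qs. distinct qs \<and> set qs = set (z # xs)}"
    then obtain qs where t: "t = lnc br (G p) (map ?H qs)" and q: "distinct qs" "set qs = set (z # xs)" by blast
    have "lnc br t (map ?H ys) \<in> span {lnc br (G p) (map ?H qs) | qs. distinct qs \<and> set qs = insert z (set ks - {p})}"
    proof (rule span_base, rule memI[of _ _ "qs @ ys"])
      show "lnc br t (map ?H ys) = lnc br (G p) (map ?H (qs @ ys))" by (simp add: t lnc_append)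
      show "distinct (qs @ ys) \<and> set (qs @ ys) = insert z (set ks - {p})"
        using q dk z unfolding ks by auto
    qed
    then show "lnc br (- t) (map ?H ys) \<in> span {lnc br (G p) (map ?H qs) | qs. distinct qs \<and> set qs = insert z (set ks - {p})}"
      by (simp add: lnc_neg span_neg)
  next
    fix x y show "lnc br (- (x + y)) (map ?H ys) = lnc br (- x) (map ?H ys) + lnc br (- y) (map ?H ys)"
      by (simp only: lnc_neg lnc_add minus_add_distrib)
  next
    fix c x show "lnc br (- sc c x) (map ?H ys) = sc c (lnc br (- x) (map ?H ys))"
      by (simp add: lnc_neg lnc_sc)
  qed
qed

lemma lemB:
  "br (lnc br a ys) c - lnc br (br a c) ys \<in> span {lnc br a (ys[k := br (ys!k) c]) | k. k < length ys}"
proof (induction ys rule: rev_induct)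
  case Nil
  then show ?case by (simp add: lnc_Nil lnc_Cons span_zero)
next
  case (snoc y ys)
  let ?S = "span {lnc br a ((ys @ [y])[k := br ((ys @ [y])!k) c]) | k. k < length (ys @ [y])}"
  have e: "br (lnc br a (ys @ [y])) c - lnc br (br a c) (ys @ [y]) =
      br (br (lnc br a ys) c - lnc br (br a c) ys) y + lnc br a (ys @ [br y c])"
  proof -
    have "br (br (lnc br a ys) y) c = br (br (lnc br a ys) c) y + br (lnc br a ys) (br y c)"
      using jac2[of "lnc br a ys" y c] by (simp add: algebra_simps)
    then show ?thesis by (simp add: lnc_snoc brdl)
  qed
  have 1: "br (br (lnc br a ys) c - lnc br (br a c) ys) y \<in> ?S"
  proof (rule span_img[where g = "\<lambda>t. br t y", OF _ _ _ snoc.IH])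
    fix t assume "t \<in> {lnc br a (ys[k := br (ys!k) c]) | k. k < length ys}"
    then obtain k where t: "t = lnc br a (ys[k := br (ys!k) c])" and k: "k < length ys" by blast
    show "br t y \<in> ?S"
    proof (rule span_base, rule memI[of _ _ k])
      show "br t y = lnc br a ((ys @ [y])[k := br ((ys @ [y]) ! k) c])"
        using k by (simp add: t lnc_snoc list_update_append nth_append)
      show "k < length (ys @ [y])" using k by simp
    qed
  qed (simp_all add: ad_l sc_l)
  have 2: "lnc br a (ys @ [br y c]) \<in> ?S"
    by (rule span_base, rule memI[of _ _ "length ys"]) (simp_all add: list_update_append)
  show ?case unfolding e by (rule span_add[OF 1 2])
qed

end



lemma sum_fun_apply: "(\<Sum>i\<in>A. f i) x = (\<Sum>i\<in>A. f i x)"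
  by (induction A rule: infinite_finite_induct) auto

definition tb' :: "('v::comm_monoid_add \<Rightarrow> 'v \<Rightarrow> 'v) \<Rightarrow> (nat set \<Rightarrow> 'v) \<Rightarrow> (nat set \<Rightarrow> 'v) \<Rightarrow> nat set \<Rightarrow> 'v"
  where "tb' br u v = (\<lambda>S. if finite S then (\<Sum>T\<in>Pow S. br (u T) (v (S - T))) else 0)"

definition zr :: "(nat set \<Rightarrow> 'v::zero) \<Rightarrow> nat set \<Rightarrow> 'v" where "zr u = u({} := 0)"

context lie_like
begin

lemma br_sum_left: "br (sum f A) y = (\<Sum>x\<in>A. br (f x) y)"
  by (induction A rule: infinite_finite_induct) (auto simp: ad_l)

lemma tbr_empty[simp]: "tbr br u v {} = 0"
  by (simp add: tbr_def)

lemma tbr_tb': "tbr br u v = tb' br (zr u) (zr v)"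
proof
  fix S show "tbr br u v S = tb' br (zr u) (zr v) S"
  proof (cases "finite S")
    case False then show ?thesis by (simp add: tbr_def tb'_def)
  next
    case True
    have "(\<Sum>T\<in>{T. T \<subseteq> S \<and> T \<noteq> {} \<and> T \<noteq> S}. br (u T) (v (S - T)))
        = (\<Sum>T\<in>Pow S. br (zr u T) (zr v (S - T)))"
    proof (rule sum.mono_neutral_cong_left)
      show "finite (Pow S)" using True by simp
      show "{T. T \<subseteq> S \<and> T \<noteq> {} \<and> T \<noteq> S} \<subseteq> Pow S" by auto
      show "\<forall>i\<in>Pow S - {T. T \<subseteq> S \<and> T \<noteq> {} \<and> T \<noteq> S}. br (zr u i) (zr v (S - i)) = 0"
        by (auto simp: zr_def)
      show "\<And>x. x \<in> {T. T \<subseteq> S \<and> T \<noteq> {} \<and> T \<noteq> S} \<Longrightarrow> br (u x) (v (S - x)) = br (zr u x) (zr v (S - x))"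
        by (auto simp: zr_def)
    qed
    then show ?thesis using True by (simp add: tbr_def tb'_def)
  qed
qed

lemma decomp:
  assumes "finite S" "distinct (i0 # is)"
  shows "lnc (tb' br) (U i0) (map U is) S =
    (\<Sum>d\<in>S \<rightarrow>\<^sub>E insert i0 (set is).
        lnc br (U i0 {s\<in>S. d s = i0}) (map (\<lambda>i. U i {s\<in>S. d s = i}) is))"
  using assms
proof (induction "is" arbitrary: S rule: rev_induct)
  case Nil
  have e: "(S \<rightarrow>\<^sub>E {i0}) = {\<lambda>s\<in>S. i0}"
    using PiE_singleton[of "\<lambda>s\<in>S. i0" S] by simp
  show ?case by (simp add: e lnc_def)
next
  case (snoc j "is")
  define A where "A = insert i0 (set is)"
  have jA: "j \<notin> A" using snoc.prems by (auto simp: A_def)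
  have d0: "distinct (i0 # is)" using snoc.prems by simp
  let ?F = "\<lambda>T d. lnc br (U i0 {s\<in>T. d s = i0}) (map (\<lambda>i. U i {s\<in>T. d s = i}) is)"
  have "lnc (tb' br) (U i0) (map U (is @ [j])) S
      = (\<Sum>T\<in>Pow S. br (lnc (tb' br) (U i0) (map U is) T) (U j (S - T)))"
    using snoc.prems by (simp add: lnc_def tb'_def)
  also have "\<dots> = (\<Sum>T\<in>Pow S. \<Sum>d\<in>T \<rightarrow>\<^sub>E A. br (?F T d) (U j (S - T)))"
  proof (rule sum.cong[OF refl])
    fix T assume "T \<in> Pow S"
    then have "finite T" using snoc.prems finite_subset by auto
    then show "br (lnc (tb' br) (U i0) (map U is) T) (U j (S - T)) = (\<Sum>d\<in>T \<rightarrow>\<^sub>E A. br (?F T d) (U j (S - T)))"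
      by (simp add: snoc.IH[OF _ d0] br_sum_left A_def)
  qed
  also have "\<dots> = (\<Sum>(T, d)\<in>Sigma (Pow S) (\<lambda>T. T \<rightarrow>\<^sub>E A). br (?F T d) (U j (S - T)))"
  proof (rule sum.Sigma)
    show "finite (Pow S)" using snoc.prems by simp
    show "\<forall>T\<in>Pow S. finite (T \<rightarrow>\<^sub>E A)"
      using snoc.prems by (auto intro!: finite_PiE simp: A_def finite_subset)
  qed
  also have "\<dots> = (\<Sum>d\<in>S \<rightarrow>\<^sub>E insert i0 (set (is @ [j])).
        lnc br (U i0 {s\<in>S. d s = i0}) (map (\<lambda>i. U i {s\<in>S. d s = i}) (is @ [j])))"
  proof (rule sum.reindex_bij_witness[where j = "\<lambda>(T, d). (\<lambda>s\<in>S. if s \<in> T then d s else j)"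
        and i = "\<lambda>d'. ({s\<in>S. d' s \<noteq> j}, restrict d' {s\<in>S. d' s \<noteq> j})"])
    fix p assume p: "p \<in> Sigma (Pow S) (\<lambda>T. T \<rightarrow>\<^sub>E A)"
    obtain T d where pe: "p = (T, d)" by (cases p)
    have T: "T \<subseteq> S" and d: "d \<in> T \<rightarrow>\<^sub>E A" using p pe by auto
    have dA: "\<And>s. s \<in> T \<Longrightarrow> d s \<in> A" using d by auto
    have dx: "\<And>s. s \<notin> T \<Longrightarrow> d s = undefined" using d by (auto simp: PiE_def extensional_def)
    let ?d' = "\<lambda>s\<in>S. if s \<in> T then d s else j"
    have Teq: "{s\<in>S. ?d' s \<noteq> j} = T" using T dA jA by auto
    show "(case (case p of (T, d) \<Rightarrow> \<lambda>s\<in>S. if s \<in> T then d s else j) of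
          d' \<Rightarrow> ({s \<in> S. d' s \<noteq> j}, restrict d' {s \<in> S. d' s \<noteq> j})) = p"
      using T dx dA jA by (auto simp: pe Teq restrict_def fun_eq_iff)
    show "(case p of (T, d) \<Rightarrow> \<lambda>s\<in>S. if s \<in> T then d s else j) \<in> S \<rightarrow>\<^sub>E insert i0 (set (is @ [j]))"
      using dA by (force simp: pe A_def)
    have B1: "\<And>i. i \<in> A \<Longrightarrow> {s\<in>S. ?d' s = i} = {s\<in>T. d s = i}"
      using T jA dA by auto
    have B2: "{s\<in>S. ?d' s = j} = S - T"
      using T jA dA by auto
    have mp: "map (\<lambda>i. U i {s\<in>S. ?d' s = i}) is = map (\<lambda>i. U i {s\<in>T. d s = i}) is"
      using B1 by (auto simp: A_def)
    show "lnc br (U i0 {s\<in>S. (case p of (T, d) \<Rightarrow> \<lambda>s\<in>S. if s \<in> T then d s else j) s = i0})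
        (map (\<lambda>i. U i {s\<in>S. (case p of (T, d) \<Rightarrow> \<lambda>s\<in>S. if s \<in> T then d s else j) s = i}) (is @ [j])) =
        (case p of (T, d) \<Rightarrow> br (?F T d) (U j (S - T)))"
    proof -
      have e: "(case p of (T, d) \<Rightarrow> \<lambda>s\<in>S. if s \<in> T then d s else j) = ?d'" by (simp add: pe)
      have b0: "{s\<in>S. ?d' s = i0} = {s\<in>T. d s = i0}" using B1[of i0] by (simp add: A_def)
      show ?thesis by (simp only: e pe prod.case map_append list.map lnc_snoc mp b0 B2)
    qed
  next
    fix d' assume d': "d' \<in> S \<rightarrow>\<^sub>E insert i0 (set (is @ [j]))"
    let ?T = "{s\<in>S. d' s \<noteq> j}"
    show "({s\<in>S. d' s \<noteq> j}, restrict d' {s\<in>S. d' s \<noteq> j}) \<in> Sigma (Pow S) (\<lambda>T. T \<rightarrow>\<^sub>E A)"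
      using d' by (auto simp: A_def)
    show "(case ({s\<in>S. d' s \<noteq> j}, restrict d' {s\<in>S. d' s \<noteq> j}) of
            (T, d) \<Rightarrow> \<lambda>s\<in>S. if s \<in> T then d s else j) = d'"
      using d' by (auto simp: fun_eq_iff PiE_def extensional_def)
  qed
  finally show ?case .
qed

end



context lie_like
begin

lemma zr_tbr[simp]: "zr (tbr br u v) = tbr br u v"
  by (auto simp: zr_def fun_eq_iff)

lemma zr_lnc: "zr (lnc (tbr br) u xs) = lnc (tb' br) (zr u) (map zr xs)"
proof (induction xs rule: rev_induct)
  case Nil then show ?case by (simp add: lnc_def)
next
  case (snoc x xs)
  have "zr (lnc (tbr br) u (xs @ [x])) = tbr br (lnc (tbr br) u xs) x" by (simp add: lnc_def)
  also have "\<dots> = tb' br (lnc (tb' br) (zr u) (map zr xs)) (zr x)" by (simp add: tbr_tb' snoc.IH)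
  also have "\<dots> = lnc (tb' br) (zr u) (map zr (xs @ [x]))" by (simp add: lnc_def)
  finally show ?case .
qed

lemma lnc_tbr_ne: "xs \<noteq> [] \<Longrightarrow> lnc (tbr br) u xs = lnc (tb' br) (zr u) (map zr xs)"
proof -
  assume "xs \<noteq> []"
  then obtain ys y where "xs = ys @ [y]" by (metis rev_exhaust)
  then have "lnc (tbr br) u xs = zr (lnc (tbr br) u xs)" by (simp add: lnc_def)
  then show ?thesis by (simp add: zr_lnc)
qed

lemma lnc_tbr_inf: "xs \<noteq> [] \<Longrightarrow> \<not> finite S \<Longrightarrow> lnc (tbr br) u xs S = 0"
proof -
  assume "xs \<noteq> []" "\<not> finite S"
  moreover obtain ys y where "xs = ys @ [y]" using \<open>xs \<noteq> []\<close> by (metis rev_exhaust)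
  ultimately show ?thesis by (simp add: lnc_def tbr_def)
qed

lemma tbr2: "tbr br (tbr br x y) z = tb' br (tb' br (zr x) (zr y)) (zr z)"
proof -
  have "tbr br (tbr br x y) z = tb' br (tbr br x y) (zr z)"
    by (subst tbr_tb') simp
  then show ?thesis by (simp add: tbr_tb'[of x y])
qed

lemma tilde_lie: "lie_like (tsc sc) (tbr br)"
proof (unfold_locales)
  fix a :: 'f and x y :: "nat set \<Rightarrow> 'v"
  show "tsc sc a (x + y) = tsc sc a x + tsc sc a y" by (simp add: tsc_def fun_eq_iff scale_right_distrib)
next
  fix a b :: 'f and x :: "nat set \<Rightarrow> 'v"
  show "tsc sc (a + b) x = tsc sc a x + tsc sc b x" by (simp add: tsc_def fun_eq_iff scale_left_distrib)
next
  fix a b :: 'f and x :: "nat set \<Rightarrow> 'v"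
  show "tsc sc a (tsc sc b x) = tsc sc (a * b) x" by (simp add: tsc_def fun_eq_iff)
next
  fix x :: "nat set \<Rightarrow> 'v"
  show "tsc sc 1 x = x" by (simp add: tsc_def fun_eq_iff)
next
  fix x y z :: "nat set \<Rightarrow> 'v"
  show "tbr br (x + y) z = tbr br x z + tbr br y z" by (simp add: tbr_def fun_eq_iff ad_l sum.distrib)
next
  fix x y z :: "nat set \<Rightarrow> 'v"
  show "tbr br x (y + z) = tbr br x y + tbr br x z" by (simp add: tbr_def fun_eq_iff ad_r sum.distrib)
next
  fix c :: 'f and x y :: "nat set \<Rightarrow> 'v"
  show "tbr br (tsc sc c x) y = tsc sc c (tbr br x y)" by (simp add: tbr_def tsc_def fun_eq_iff sc_l scale_sum_right)
next
  fix c :: 'f and x y :: "nat set \<Rightarrow> 'v"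
  show "tbr br x (tsc sc c y) = tsc sc c (tbr br x y)" by (simp add: tbr_def tsc_def fun_eq_iff sc_r scale_sum_right)
next
  fix x y :: "nat set \<Rightarrow> 'v"
  show "tbr br x y = - tbr br y x"
  proof
    fix S show "tbr br x y S = (- tbr br y x) S"
    proof (cases "finite S")
      case False then show ?thesis by (simp add: tbr_def)
    next
      case fin: True
      define U where "U = (\<lambda>i::nat. if i = 0 then zr x else zr y)"
      have 1: "tbr br x y S = (\<Sum>d\<in>S \<rightarrow>\<^sub>E {0::nat,2}. br (zr x {s\<in>S. d s = 0}) (zr y {s\<in>S. d s = 2}))"
        using decomp[OF fin, of "0::nat" "[2]" U] by (simp add: U_def tbr_tb' lnc_def)
      have e: "insert (2::nat) (set [0]) = {0,2}" by auto
      have 2: "tbr br y x S = (\<Sum>d\<in>S \<rightarrow>\<^sub>E {0::nat,2}. br (zr y {s\<in>S. d s = 2}) (zr x {s\<in>S. d s = 0}))"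
        using decomp[OF fin, of "2::nat" "[0]" U] unfolding e by (simp add: U_def tbr_tb' lnc_def)
      have "tbr br x y S = (\<Sum>d\<in>S \<rightarrow>\<^sub>E {0::nat,2}. - br (zr y {s\<in>S. d s = 2}) (zr x {s\<in>S. d s = 0}))"
        unfolding 1 by (rule sum.cong[OF refl], rule anti)
      then show ?thesis by (simp add: 2 sum_negf)
    qed
  qed
next
  fix x y z :: "nat set \<Rightarrow> 'v"
  show "tbr br (tbr br x y) z + tbr br (tbr br y z) x + tbr br (tbr br z x) y = 0"
  proof
    fix S show "(tbr br (tbr br x y) z + tbr br (tbr br y z) x + tbr br (tbr br z x) y) S = 0 S"
    proof (cases "finite S")
      case False then show ?thesis by (simp add: tbr_def)
    next
      case fin: True
      define U where "U = (\<lambda>i::nat. if i = 0 then zr x else if i = 2 then zr y else zr z)"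
      let ?B = "\<lambda>d i. {s\<in>S. d s = (i::nat)}"
      have e1: "insert (0::nat) (set [2,3]) = {0,2,3}" by auto
      have e2: "insert (2::nat) (set [3,0]) = {0,2,3}" by auto
      have e3: "insert (3::nat) (set [0,2]) = {0,2,3}" by auto
      have 1: "tbr br (tbr br x y) z S = (\<Sum>d\<in>S \<rightarrow>\<^sub>E {0::nat,2,3}. br (br (zr x (?B d 0)) (zr y (?B d 2))) (zr z (?B d 3)))"
        using decomp[OF fin, of "0::nat" "[2,3]" U] unfolding e1 by (simp add: U_def tbr2 lnc_def)
      have 2: "tbr br (tbr br y z) x S = (\<Sum>d\<in>S \<rightarrow>\<^sub>E {0::nat,2,3}. br (br (zr y (?B d 2)) (zr z (?B d 3))) (zr x (?B d 0)))"
        using decomp[OF fin, of "2::nat" "[3,0]" U] unfolding e2 by (simp add: U_def tbr2 lnc_def)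
      have 3: "tbr br (tbr br z x) y S = (\<Sum>d\<in>S \<rightarrow>\<^sub>E {0::nat,2,3}. br (br (zr z (?B d 3)) (zr x (?B d 0))) (zr y (?B d 2)))"
        using decomp[OF fin, of "3::nat" "[0,2]" U] unfolding e3 by (simp add: U_def tbr2 lnc_def)
      show ?thesis by (simp add: 1 2 3 sum.distrib[symmetric] jac)
    qed
  qed
qed

lemma ident_tilde:
  assumes id: "satisfies_ml_identity sc br n \<alpha>" and n2: "2 \<le> n"
  shows "mlpoly (tsc sc) (tbr br) n \<alpha> X = 0"
proof
  fix S
  let ?P = "{\<sigma>. \<sigma> permutes {1..<n}}"
  have ne: "[1..<n] \<noteq> []" using n2 by simp
  have "mlpoly (tsc sc) (tbr br) n \<alpha> X S = (\<Sum>\<sigma>\<in>?P. sc (\<alpha> \<sigma>) (lnc (tbr br) (X 0) (map (\<lambda>i. X (\<sigma> i)) [1..<n]) S))"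
    by (simp add: mlpoly_def sum_fun_apply tsc_def)
  also have "\<dots> = 0"
  proof (cases "finite S")
    case False then show ?thesis using ne by (simp add: lnc_tbr_inf)
  next
    case fin: True
    define U where "U = (\<lambda>i. zr (X i))"
    let ?Y = "\<lambda>d i. U i {s\<in>S. d s = i}"
    have "\<And>\<sigma>. \<sigma> \<in> ?P \<Longrightarrow> lnc (tbr br) (X 0) (map (\<lambda>i. X (\<sigma> i)) [1..<n]) S
        = (\<Sum>d\<in>S \<rightarrow>\<^sub>E {0..<n}. lnc br (?Y d 0) (map (\<lambda>i. ?Y d (\<sigma> i)) [1..<n]))"
    proof -
      fix \<sigma> assume "\<sigma> \<in> ?P"
      then have p: "\<sigma> permutes {1..<n}" by simp
      have im: "\<sigma> ` {1..<n} = {1..<n}" by (rule permutes_image[OF p])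
      have inj: "inj \<sigma>" using p by (rule permutes_inj)
      have d: "distinct (0 # map \<sigma> [1..<n])"
      proof -
        have "0 \<notin> \<sigma> ` {1..<n}" using im by auto
        then show ?thesis using inj by (auto simp: distinct_map inj_on_def)
      qed
      have s: "insert 0 (set (map \<sigma> [1..<n])) = {0..<n}" using im n2 by auto
      have "lnc (tbr br) (X 0) (map (\<lambda>i. X (\<sigma> i)) [1..<n]) S = lnc (tb' br) (U 0) (map U (map \<sigma> [1..<n])) S"
        using ne by (simp add: lnc_tbr_ne U_def o_def)
      also have "\<dots> = (\<Sum>d\<in>S \<rightarrow>\<^sub>E {0..<n}. lnc br (?Y d 0) (map (\<lambda>i. ?Y d (\<sigma> i)) [1..<n]))"
        using decomp[OF fin d, of U] unfolding s by (simp add: o_def)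
      finally show "lnc (tbr br) (X 0) (map (\<lambda>i. X (\<sigma> i)) [1..<n]) S
        = (\<Sum>d\<in>S \<rightarrow>\<^sub>E {0..<n}. lnc br (?Y d 0) (map (\<lambda>i. ?Y d (\<sigma> i)) [1..<n]))" .
    qed
    then have "(\<Sum>\<sigma>\<in>?P. sc (\<alpha> \<sigma>) (lnc (tbr br) (X 0) (map (\<lambda>i. X (\<sigma> i)) [1..<n]) S))
      = (\<Sum>\<sigma>\<in>?P. \<Sum>d\<in>S \<rightarrow>\<^sub>E {0..<n}. sc (\<alpha> \<sigma>) (lnc br (?Y d 0) (map (\<lambda>i. ?Y d (\<sigma> i)) [1..<n])))"
      by (simp add: scale_sum_right)
    also have "\<dots> = (\<Sum>d\<in>S \<rightarrow>\<^sub>E {0..<n}. \<Sum>\<sigma>\<in>?P. sc (\<alpha> \<sigma>) (lnc br (?Y d 0) (map (\<lambda>i. ?Y d (\<sigma> i)) [1..<n])))"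
      by (rule sum.swap)
    also have "\<dots> = (\<Sum>d\<in>S \<rightarrow>\<^sub>E {0..<n}. mlpoly sc br n \<alpha> (?Y d))"
      by (simp add: mlpoly_def)
    also have "\<dots> = 0" using id by (simp add: satisfies_ml_identity_def)
    finally show ?thesis .
  qed
  finally show "mlpoly (tsc sc) (tbr br) n \<alpha> X S = 0 S" by simp
qed

end



lemma lie_algebra_like:
  assumes "lie_algebra sc br" shows "lie_like sc br"
proof -
  interpret lie_algebra sc br by fact
  show ?thesis
  proof (unfold_locales)
    fix x y z show "br (x + y) z = br x z + br y z" by (rule br_add_left)
  next
    fix x y z show "br x (y + z) = br x y + br x z" by (rule br_add_right)
  next
    fix c x y show "br (sc c x) y = sc c (br x y)" by (rule br_scale_left)
  next
    fix c x y show "br x (sc c y) = sc c (br x y)" by (rule br_scale_right)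
  next
    fix x y
    have "0 = br (x + y) (x + y)" by (simp add: br_alt)
    also have "\<dots> = br x x + br y y + (br x y + br y x)" by (simp add: br_add_left br_add_right ac_simps)
    also have "\<dots> = br x y + br y x" by (simp add: br_alt)
    finally have "br x y + br y x = 0" by simp
    then show "br x y = - br y x" by (simp add: eq_neg_iff_add_eq_0)
  next
    fix x y z show "br (br x y) z + br (br y z) x + br (br z x) y = 0" by (rule jacobi)
  qed
qed

lemma genmem:
  fixes H :: "nat \<Rightarrow> 'x" and b :: "nat \<Rightarrow> 'x"
  assumes s: "s \<in> {2..<n}" and dq: "distinct qs" and sq: "set qs = insert 0 ({2..<n} - {s})"
    and Hb: "\<forall>q\<in>{2..<n}. H q = b q" and H0: "H 0 = F (b s)"
  shows "\<exists>\<pi> k. \<pi> permutes {2..<n} \<and> k \<in> {2..<n} \<and>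
     map H qs = map (\<lambda>j. if j = k then F (b (\<pi> j)) else b (\<pi> j)) [2..<n]"
proof -
  have "card (set qs) = n - 2"
    using s unfolding sq by (simp add: card_insert_if) arith
  then have len: "length qs = n - 2" using distinct_card[OF dq] by simp
  have "0 \<in> set qs" using sq by simp
  then obtain k0 where k0: "k0 < length qs" "qs ! k0 = 0" by (auto simp: in_set_conv_nth)
  define r where "r q = (if q = 0 then s else q)" for q :: nat
  define \<pi> where "\<pi> j = (if j \<in> {2..<n} then r (qs ! (j - 2)) else j)" for j
  have sn: "s \<notin> set qs" using sq s by auto
  have rin: "\<And>i. i < length qs \<Longrightarrow> r (qs ! i) \<in> {2..<n}"
  proof -
    fix i assume "i < length qs"
    then have "qs ! i \<in> set qs" by simp
    then show "r (qs ! i) \<in> {2..<n}" using sq s by (auto simp: r_def)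
  qed
  have rinj: "\<And>i j. i < length qs \<Longrightarrow> j < length qs \<Longrightarrow> r (qs ! i) = r (qs ! j) \<Longrightarrow> i = j"
  proof -
    fix i j assume ij: "i < length qs" "j < length qs" "r (qs ! i) = r (qs ! j)"
    have "qs ! i \<in> set qs" "qs ! j \<in> set qs" using ij by auto
    then have "qs ! i = qs ! j" using ij(3) sn by (auto simp: r_def split: if_splits)
    then show "i = j" using nth_eq_iff_index_eq[OF dq ij(1,2)] by simp
  qed
  have inj: "inj_on \<pi> {2..<n}"
  proof (rule inj_onI)
    fix x y assume xy: "x \<in> {2..<n}" "y \<in> {2..<n}" "\<pi> x = \<pi> y"
    then have "x - 2 = y - 2" using rinj[of "x - 2" "y - 2"] len by (auto simp: \<pi>_def)
    then show "x = y" using xy by auto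
  qed
  have sub: "\<pi> ` {2..<n} \<subseteq> {2..<n}" using rin len by (auto simp: \<pi>_def)
  have perm: "\<pi> permutes {2..<n}"
  proof (rule bij_imp_permutes)
    show "bij_betw \<pi> {2..<n} {2..<n}"
      unfolding bij_betw_def using inj endo_inj_surj[OF _ sub inj] by simp
    show "\<And>x. x \<notin> {2..<n} \<Longrightarrow> \<pi> x = x" unfolding \<pi>_def by auto
  qed
  have k: "k0 + 2 \<in> {2..<n}" using k0 len by auto
  have "map H qs = map (\<lambda>j. if j = k0 + 2 then F (b (\<pi> j)) else b (\<pi> j)) [2..<n]"
  proof (rule nth_equalityI)
    show "length (map H qs) = length (map (\<lambda>j. if j = k0 + 2 then F (b (\<pi> j)) else b (\<pi> j)) [2..<n])"
      using len by simp
  next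
    fix i assume i: "i < length (map H qs)"
    then have il: "i < length qs" by simp
    show "map H qs ! i = map (\<lambda>j. if j = k0 + 2 then F (b (\<pi> j)) else b (\<pi> j)) [2..<n] ! i"
    proof (cases "i = k0")
      case True
      then show ?thesis using il len k0 H0 by (auto simp: \<pi>_def r_def)
    next
      case False
      have nz: "qs ! i \<noteq> 0" using False k0 il nth_eq_iff_index_eq[OF dq il k0(1)] by auto
      have "qs ! i \<in> {2..<n}" using nz il sq nth_mem[OF il] by auto
      then show ?thesis using il len False nz Hb by (auto simp: \<pi>_def r_def)
    qed
  qed
  then show ?thesis using perm k by blast
qed



theorem lemma27:
  fixes sc :: "'f::field \<Rightarrow> 'v::ab_group_add \<Rightarrow> 'v"
    and br :: "'v \<Rightarrow> 'v \<Rightarrow> 'v"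
    and n :: nat
    and \<alpha> :: "(nat \<Rightarrow> nat) \<Rightarrow> 'f"
    and a c :: "nat set \<Rightarrow> 'v"
    and b :: "nat \<Rightarrow> nat set \<Rightarrow> 'v"
  assumes L: "lie_algebra sc br"
    and n2: "2 \<le> n"
    and alpha_id: "\<alpha> id = 1"
    and f_identity: "satisfies_ml_identity sc br n \<alpha>"
    and minimal: "\<forall>m \<beta>. 1 \<le> m \<and> m < n \<and> nonzero_coeffs m \<beta> \<longrightarrow>
                         \<not> satisfies_ml_identity sc br m \<beta>"
    and a_in: "a \<in> ltilde"
    and b_in: "\<forall>i \<in> {2..<n}. b i \<in> ltilde"
    and c_in: "c \<in> ltilde"
  shows "tbr br
           (\<Sum>\<sigma> \<in> {\<sigma>. \<sigma> permutes {1..<n} \<and> \<sigma> 1 = 1}.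
              tsc sc (\<alpha> \<sigma>) (lnc (tbr br) a (map (\<lambda>i. b (\<sigma> i)) [2..<n])))
           c
         \<in> module.span (tsc sc)
             {lnc (tbr br) a (map (\<lambda>j. if j = k then tbr br (b (\<pi> j)) c else b (\<pi> j)) [2..<n])
              | \<pi> k. \<pi> permutes {2..<n} \<and> k \<in> {2..<n}}"
proof -
  interpret L: lie_like sc br by (rule lie_algebra_like[OF L])
  interpret T: lie_like "tsc sc" "tbr br" by (rule L.tilde_lie)
  define Gen where "Gen = {lnc (tbr br) a (map (\<lambda>j. if j = k then tbr br (b (\<pi> j)) c else b (\<pi> j)) [2..<n])
              | \<pi> k. \<pi> permutes {2..<n} \<and> k \<in> {2..<n}}"
  define X where "X i = (if i = 0 then c else if i = 1 then a else b i)" for i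
  define P where "P = {\<sigma>. \<sigma> permutes {1..<n}}"
  define P1 where "P1 = {\<sigma>. \<sigma> permutes {1..<n} \<and> \<sigma> 1 = 1}"
  define ys where "ys \<sigma> = map (\<lambda>i. b (\<sigma> i)) [2..<n]" for \<sigma> :: "nat \<Rightarrow> nat"
  define W where "W \<sigma> = lnc (tbr br) (X 0) (map (\<lambda>i. X (\<sigma> i)) [1..<n])" for \<sigma> :: "nat \<Rightarrow> nat"
  have finP: "finite P" unfolding P_def by (rule finite_permutations) simp
  have P1P: "P1 \<subseteq> P" by (auto simp: P_def P1_def)
  have finP1: "finite P1" using finP P1P finite_subset by blast
  have GM: "lnc (tbr br) a (map H qs) \<in> Gen"
    if hh: "s \<in> {2..<n}" "distinct qs" "set qs = insert 0 ({2..<n} - {s})"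
      "\<forall>q\<in>{2..<n}. H q = b q" "H 0 = tbr br (b s) c" for s qs H
  proof -
    obtain \<pi> k where "\<pi> permutes {2..<n}" "k \<in> {2..<n}"
      "map H qs = map (\<lambda>j. if j = k then tbr br (b (\<pi> j)) c else b (\<pi> j)) [2..<n]"
      using genmem[OF hh(1-4), of "\<lambda>x. tbr br x c"] hh(5) by blast
    then show ?thesis unfolding Gen_def by auto
  qed
  have ln: "[1..<n] = 1 # [2..<n]" using n2 upt_conv_Cons[of 1 n] by (simp add: numeral_2_eq_2)
  have pimg: "\<sigma> ` {2..<n} = {1..<n} - {\<sigma> 1}" if "\<sigma> \<in> P" for \<sigma>
  proof -
    have p: "\<sigma> permutes {1..<n}" using that by (simp add: P_def)
    have "\<sigma> ` ({1..<n} - {1}) = \<sigma> ` {1..<n} - \<sigma> ` {1}"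
      by (rule inj_on_image_set_diff[OF permutes_inj_on[OF p]]) (use n2 in auto)
    moreover have "{1..<n} - {1} = {2..<n}" by auto
    ultimately show ?thesis using permutes_image[OF p] by simp
  qed
  have pin: "\<sigma> 1 \<in> {1..<n}" if "\<sigma> \<in> P" for \<sigma>
  proof -
    have "1 \<in> {1..<n}" using n2 by simp
    then show ?thesis using that permutes_in_image[of \<sigma> "{1..<n}" 1] by (simp add: P_def)
  qed
  have pdist: "distinct (map \<sigma> [2..<n])" if "\<sigma> \<in> P" for \<sigma>
    using that permutes_inj_on[of \<sigma> "{1..<n}"] by (auto simp: P_def distinct_map intro: inj_on_subset)
  have id0: "(\<Sum>\<sigma>\<in>P. tsc sc (\<alpha> \<sigma>) (W \<sigma>)) = 0"
    using L.ident_tilde[OF f_identity n2, of X] by (simp add: mlpoly_def P_def W_def)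
  have split: "(\<Sum>\<sigma>\<in>P. tsc sc (\<alpha> \<sigma>) (W \<sigma>)) = (\<Sum>\<sigma>\<in>P1. tsc sc (\<alpha> \<sigma>) (W \<sigma>)) + (\<Sum>\<sigma>\<in>P - P1. tsc sc (\<alpha> \<sigma>) (W \<sigma>))"
    using sum.subset_diff[OF P1P finP] by (simp add: add.commute)
  have lhs: "tbr br (\<Sum>\<sigma>\<in>P1. tsc sc (\<alpha> \<sigma>) (lnc (tbr br) a (ys \<sigma>))) c
      = (\<Sum>\<sigma>\<in>P1. tsc sc (\<alpha> \<sigma>) (tbr br (lnc (tbr br) a (ys \<sigma>)) c))"
    by (simp add: T.br_sum_left T.sc_l)
  have main: "tbr br (\<Sum>\<sigma>\<in>P1. tsc sc (\<alpha> \<sigma>) (lnc (tbr br) a (ys \<sigma>))) c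
      = (\<Sum>\<sigma>\<in>P1. tsc sc (\<alpha> \<sigma>) (tbr br (lnc (tbr br) a (ys \<sigma>)) c + W \<sigma>)) + (\<Sum>\<sigma>\<in>P - P1. tsc sc (\<alpha> \<sigma>) (W \<sigma>))"
    unfolding lhs using id0 split by (simp add: T.scale_right_distrib sum.distrib add.assoc)
  have c1: "tbr br (lnc (tbr br) a (ys \<sigma>)) c + W \<sigma> \<in> T.span Gen" if "\<sigma> \<in> P1" for \<sigma>
  proof -
    have sP: "\<sigma> \<in> P" using that P1P by auto
    have s1: "\<sigma> 1 = 1" using that by (simp add: P1_def)
    have im: "\<sigma> ` {2..<n} = {2..<n}" using pimg[OF sP] s1 by auto
    define ks where "ks = map \<sigma> [2..<n]"
    have sks: "set ks = {2..<n}" using im by (simp add: ks_def)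
    have dks: "distinct ks" using pdist[OF sP] by (simp add: ks_def)
    have yk: "ys \<sigma> = map X ks" unfolding ys_def ks_def map_map
    proof (rule map_cong[OF refl])
      fix x assume "x \<in> set [2..<n]"
      then have "\<sigma> x \<in> {2..<n}" using im by auto
      then show "b (\<sigma> x) = (X \<circ> \<sigma>) x" by (auto simp: X_def)
    qed
    have w1: "W \<sigma> = lnc (tbr br) (X 0) (X (\<sigma> 1) # ys \<sigma>)"
      unfolding W_def ln list.map yk ks_def map_map o_def by (rule refl)
    have "W \<sigma> = lnc (tbr br) (tbr br c a) (ys \<sigma>)"
      unfolding w1 s1 by (simp add: X_def T.lnc_Cons)
    also have "\<dots> = - lnc (tbr br) (tbr br a c) (ys \<sigma>)"
      by (simp add: T.anti[of c a] T.lnc_neg)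
    finally have "tbr br (lnc (tbr br) a (ys \<sigma>)) c + W \<sigma> =
       tbr br (lnc (tbr br) a (ys \<sigma>)) c - lnc (tbr br) (tbr br a c) (ys \<sigma>)" by simp
    moreover have "\<dots> \<in> T.span Gen"
    proof (rule T.span_mono[THEN subsetD, OF _ T.lemB])
      show "{lnc (tbr br) a ((ys \<sigma>)[k := tbr br (ys \<sigma> ! k) c]) | k. k < length (ys \<sigma>)} \<subseteq> Gen"
      proof
        fix t assume "t \<in> {lnc (tbr br) a ((ys \<sigma>)[k := tbr br (ys \<sigma> ! k) c]) | k. k < length (ys \<sigma>)}"
        then obtain k where t: "t = lnc (tbr br) a ((ys \<sigma>)[k := tbr br (ys \<sigma> ! k) c])" and k: "k < length (ys \<sigma>)"
          by blast
        have kl: "k < length ks" using k by (simp add: ys_def ks_def)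
        define s where "s = ks ! k"
        have s: "s \<in> {2..<n}" using kl sks s_def nth_mem by blast
        define H where "H q = (if q = 0 then tbr br (b s) c else b q)" for q
        have mXH: "map X ks = map H ks"
        proof (rule map_cong[OF refl])
          fix q assume "q \<in> set ks"
          then have "q \<in> {2..<n}" using sks by simp
          then show "X q = H q" by (auto simp: X_def H_def)
        qed
        have ysk: "ys \<sigma> ! k = b s" using kl s by (simp add: yk s_def X_def)
        have "(ys \<sigma>)[k := tbr br (ys \<sigma> ! k) c] = (map H ks)[k := H 0]"
          unfolding ysk by (simp add: yk mXH H_def)
        also have "\<dots> = map H (ks[k := 0])" by (simp add: map_update)
        finally have "(ys \<sigma>)[k := tbr br (ys \<sigma> ! k) c] = map H (ks[k := 0])" .
        moreover have "lnc (tbr br) a (map H (ks[k := 0])) \<in> Gen"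
        proof (rule GM[OF s])
          show "distinct (ks[k := 0])" using dks sks by (auto intro!: distinct_list_update)
          show "set (ks[k := 0]) = insert 0 ({2..<n} - {s})"
            using set_update_distinct[OF dks kl] sks by (simp add: s_def)
          show "\<forall>q\<in>{2..<n}. H q = b q" by (auto simp: H_def)
          show "H 0 = tbr br (b s) c" by (simp add: H_def)
        qed
        ultimately show "t \<in> Gen" by (simp add: t)
      qed
    qed
    ultimately show ?thesis by simp
  qed
  have c2: "W \<sigma> \<in> T.span Gen" if "\<sigma> \<in> P - P1" for \<sigma>
  proof -
    have sP: "\<sigma> \<in> P" using that by auto
    have s1: "\<sigma> 1 \<noteq> 1" using that by (auto simp: P_def P1_def)
    define s where "s = \<sigma> 1"
    have s: "s \<in> {2..<n}" using pin[OF sP] s1 by (auto simp: s_def)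
    define ks where "ks = map \<sigma> [2..<n]"
    have sks: "set ks = {1..<n} - {s}" using pimg[OF sP] by (simp add: ks_def s_def)
    have dks: "distinct ks" using pdist[OF sP] by (simp add: ks_def)
    let ?u = "tbr br (b s) c"
    have w1: "W \<sigma> = lnc (tbr br) (X 0) (X (\<sigma> 1) # map X ks)"
      unfolding W_def ln list.map ks_def map_map o_def by (rule refl)
    have "W \<sigma> = lnc (tbr br) (tbr br c (b s)) (map X ks)"
      unfolding w1 s_def[symmetric] using s by (simp add: X_def T.lnc_Cons)
    also have "\<dots> = - lnc (tbr br) ?u (map X ks)"
      by (simp add: T.anti[of c] T.lnc_neg)
    finally have We: "W \<sigma> = - lnc (tbr br) ?u (map X ks)" .
    have "lnc (tbr br) ?u (map X ks) \<in> T.span Gen"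
    proof (rule T.span_mono[THEN subsetD, OF _ T.lemC[OF dks, where p = 1 and z = 0 and u = ?u and G = X]])
      show "1 \<in> set ks" using sks s n2 by auto
      show "0 \<notin> set ks" using sks by auto
      show "{lnc (tbr br) (X 1) (map (X(0 := ?u)) qs) | qs. distinct qs \<and> set qs = insert 0 (set ks - {1})} \<subseteq> Gen"
      proof
        fix t assume "t \<in> {lnc (tbr br) (X 1) (map (X(0 := ?u)) qs) | qs. distinct qs \<and> set qs = insert 0 (set ks - {1})}"
        then obtain qs where t: "t = lnc (tbr br) (X 1) (map (X(0 := ?u)) qs)"
          and q: "distinct qs" "set qs = insert 0 (set ks - {1})" by blast
        have X1: "X 1 = a" by (simp add: X_def)
        have "lnc (tbr br) a (map (X(0 := ?u)) qs) \<in> Gen"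
        proof (rule GM[OF s q(1)])
          have "set ks - {1} = {2..<n} - {s}" unfolding sks by auto
          then show "set qs = insert 0 ({2..<n} - {s})" using q(2) by simp
          show "\<forall>q\<in>{2..<n}. (X(0 := ?u)) q = b q" by (auto simp: X_def)
          show "(X(0 := ?u)) 0 = tbr br (b s) c" by simp
        qed
        then show "t \<in> Gen" unfolding t X1 .
      qed
    qed
    then show ?thesis unfolding We by (rule T.span_neg)
  qed
  have "tbr br (\<Sum>\<sigma>\<in>P1. tsc sc (\<alpha> \<sigma>) (lnc (tbr br) a (ys \<sigma>))) c \<in> T.span Gen"
    unfolding main
  proof (rule T.span_add)
    show "(\<Sum>\<sigma>\<in>P1. tsc sc (\<alpha> \<sigma>) (tbr br (lnc (tbr br) a (ys \<sigma>)) c + W \<sigma>)) \<in> T.span Gen"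
      by (rule T.span_sum, rule T.span_scale, rule c1)
    show "(\<Sum>\<sigma>\<in>P - P1. tsc sc (\<alpha> \<sigma>) (W \<sigma>)) \<in> T.span Gen"
      by (rule T.span_sum, rule T.span_scale, rule c2)
  qed
  then show ?thesis by (simp only: Gen_def P1_def ys_def)
qed


end
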